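(* Let $N,K\ge 1$, $\mathcal{L}\in\mathbb{R}^{N\times N}$, $e^{(0)}\in\mathbb{R}^N$, and $C_1,\dots,C_K\in\mathbb{R}^{N\times N}$. Suppose there is a real orthogonal matrix $P$ and real diagonal matrices $\Lambda_1,\dots,\Lambda_K$ with $I_N-C_j\mathcal{L}=P\Lambda_jP^{-1}$ and $\|I_N-C_j\mathcal{L}\|_2\le 1$ for all $j\in[K]$. Define $h:[K]^*\to\mathbb{R}$ by $h(S)=\|(I_N-C_{S_{|S|}}\mathcal{L})\cdots(I_N-C_{S_1}\mathcal{L})e^{(0)}\|_2^2$ (with $h(\emptyset)=\|e^{(0)}\|_2^2$). Then $h$ is sequence supermodular: for all $S,S'\in[K]^*$ with $S\preceq S'$ and all $\omega\in[K]$, $$h(S)-h(S\oplus\omega)\ge h(S')-h(S'\oplus\omega).$$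
   Context: $[K]=\{1,\dots,K\}$; $[K]^*$ is the set of all finite sequences (including the empty sequence) with entries in $[K]$. $S\oplus S'$ denotes concatenation and $S\oplus\omega=S\oplus(\omega)$. $S\preceq S'$ ($S$ is a prefix of $S'$) means $S'=S\oplus L$ for some $L\in[K]^*$. $\|\cdot\|_2$ on matrices is the operator (spectral) norm. *)

theory Defs
  imports "HOL-Analysis.Analysis"
begin

definition diag_mat :: "real^'n^'n \<Rightarrow> bool" where
  "diag_mat D \<longleftrightarrow> (\<forall>i j. i \<noteq> j \<longrightarrow> D $ i $ j = 0)"

text \<open>Error after applying the sequence S (first element applied first):
  (I - C_{S_|S|} L) ... (I - C_{S_1} L) e0.\<close>
definition seq_err :: "(nat \<Rightarrow> real^'n^'n) \<Rightarrow> real^'n^'n \<Rightarrow> real^'n \<Rightarrow> nat list \<Rightarrow> real^'n" where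
  "seq_err C L e0 S = foldl (\<lambda>v j. (mat 1 - C j ** L) *v v) e0 S"

definition h_fun :: "(nat \<Rightarrow> real^'n^'n) \<Rightarrow> real^'n^'n \<Rightarrow> real^'n \<Rightarrow> nat list \<Rightarrow> real" where
  "h_fun C L e0 S = (norm (seq_err C L e0 S))^2"

end

theory Submission
  imports Defs
begin

lemma minv_orth:
  fixes P :: "real^'n^'n"
  assumes "orthogonal_matrix P"
  shows "matrix_inv P = transpose P"
proof -
  have ex: "P ** transpose P = mat 1 \<and> transpose P ** P = mat 1"
    using assms unfolding orthogonal_matrix_def by auto
  let ?M = "matrix_inv P"
  have M: "P ** ?M = mat 1 \<and> ?M ** P = mat 1"
    unfolding matrix_inv_def by (rule someI[of _ "transpose P"]) (rule ex)
  have "?M = (transpose P ** P) ** ?M" using ex by simp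
  also have "\<dots> = transpose P ** (P ** ?M)" by (simp add: matrix_mul_assoc)
  also have "\<dots> = transpose P" using M by simp
  finally show ?thesis .
qed

lemma norm_orth:
  fixes Q :: "real^'n^'n"
  assumes "orthogonal_matrix Q"
  shows "norm (Q *v x) = norm x"
proof -
  have "orthogonal_transformation ((*v) Q)"
    using assms by (simp add: orthogonal_transformation_matrix)
  then show ?thesis using orthogonal_transformation_norm by blast
qed

lemma diag_mult:
  fixes D :: "real^'n^'n"
  assumes "diag_mat D"
  shows "(D *v x) $ i = D $ i $ i * x $ i"
proof -
  have "(D *v x) $ i = (\<Sum>j\<in>UNIV. D $ i $ j * x $ j)"
    by (simp add: matrix_vector_mult_def)
  also have "\<dots> = (\<Sum>j\<in>{i}. D $ i $ j * x $ j)"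
    by (rule sum.mono_neutral_right) (use assms in \<open>auto simp: diag_mat_def\<close>)
  finally show ?thesis by simp
qed

lemma norm_sq_sum:
  fixes x :: "real^'n"
  shows "(norm x)^2 = (\<Sum>i\<in>UNIV. (x $ i)^2)"
  unfolding power2_norm_eq_inner inner_vec_def by (simp add: power2_eq_square)

lemma norm_axis_abs:
  fixes c :: real
  shows "norm (axis i c :: real^'n) = \<bar>c\<bar>"
proof -
  have "axis i c = c *\<^sub>R (axis i 1 :: real^'n)"
    by (simp add: vec_eq_iff axis_def)
  then show ?thesis by (simp add: norm_axis_1)
qed

theorem proposition2:
  fixes K :: nat
    and L :: "real^'n^'n"
    and e0 :: "real^'n"
    and C :: "nat \<Rightarrow> real^'n^'n"
    and P :: "real^'n^'n"
    and \<Lambda> :: "nat \<Rightarrow> real^'n^'n"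
  assumes "K \<ge> 1"
    and "orthogonal_matrix P"
    and "\<And>j. j \<in> {1..K} \<Longrightarrow> diag_mat (\<Lambda> j)"
    and "\<And>j. j \<in> {1..K} \<Longrightarrow> mat 1 - C j ** L = P ** \<Lambda> j ** matrix_inv P"
    and "\<And>j. j \<in> {1..K} \<Longrightarrow> onorm (\<lambda>x. (mat 1 - C j ** L) *v x) \<le> 1"
  shows "\<forall>S S' \<omega>. set S' \<subseteq> {1..K} \<and> (\<exists>T. S' = S @ T) \<and> \<omega> \<in> {1..K} \<longrightarrow>
           h_fun C L e0 S - h_fun C L e0 (S @ [\<omega>]) \<ge> h_fun C L e0 S' - h_fun C L e0 (S' @ [\<omega>])"
proof (intro allI impI)
  note orth = assms(2)
  have PtP: "transpose P ** P = mat 1" and PPt: "P ** transpose P = mat 1"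
    using orth unfolding orthogonal_matrix_def by auto
  have Aeq: "mat 1 - C j ** L = P ** \<Lambda> j ** transpose P" if "j \<in> {1..K}" for j
    using assms(4)[OF that] minv_orth[OF orth] by simp
  define z where "z S = transpose P *v seq_err C L e0 S" for S
  have hz: "h_fun C L e0 S = (\<Sum>i\<in>UNIV. (z S $ i)^2)" for S
    unfolding h_fun_def z_def norm_sq_sum[symmetric]
    using norm_orth[of "transpose P" "seq_err C L e0 S"] orth by simp
  have zstep: "z (S @ [j]) $ i = \<Lambda> j $ i $ i * z S $ i" if "j \<in> {1..K}" for S j i
  proof -
    have "z (S @ [j]) = transpose P *v ((P ** \<Lambda> j ** transpose P) *v seq_err C L e0 S)"
      unfolding z_def seq_err_def using Aeq[OF that] by simp
    also have "\<dots> = (transpose P ** P) *v (\<Lambda> j *v (transpose P *v seq_err C L e0 S))"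
      by (simp only: matrix_vector_mul_assoc matrix_mul_assoc)
    also have "\<dots> = \<Lambda> j *v z S" using PtP by (simp add: z_def)
    finally show ?thesis using diag_mult[OF assms(3)[OF that]] by simp
  qed
  have lam: "\<bar>\<Lambda> j $ i $ i\<bar> \<le> 1" if j: "j \<in> {1..K}" for j i
  proof -
    let ?x = "P *v axis i 1"
    have nx: "norm ?x = 1" using norm_orth[OF orth] norm_axis_1 by metis
    have "norm ((mat 1 - C j ** L) *v ?x) \<le> onorm (\<lambda>x. (mat 1 - C j ** L) *v x) * norm ?x"
      using onorm[OF matrix_vector_mul_bounded_linear] by blast
    also have "\<dots> \<le> 1" using assms(5)[OF j] nx by simp
    finally have le: "norm ((mat 1 - C j ** L) *v ?x) \<le> 1" .
    have "(mat 1 - C j ** L) *v ?x = P *v (\<Lambda> j *v ((transpose P ** P) *v axis i 1))"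
      using Aeq[OF j] by (simp only: matrix_vector_mul_assoc matrix_mul_assoc)
    also have "\<dots> = P *v (\<Lambda> j *v axis i 1)" using PtP by simp
    finally have "norm ((mat 1 - C j ** L) *v ?x) = norm (\<Lambda> j *v axis i 1)"
      using norm_orth[OF orth] by simp
    moreover have "\<Lambda> j *v axis i 1 = axis i (\<Lambda> j $ i $ i)"
      using diag_mult[OF assms(3)[OF j]] by (simp add: vec_eq_iff axis_def)
    ultimately show ?thesis using le by (simp add: norm_axis_abs)
  qed
  have mono: "set T \<subseteq> {1..K} \<Longrightarrow> (z (S @ T) $ i)^2 \<le> (z S $ i)^2" for S T i
  proof (induction T rule: rev_induct)
    case Nil then show ?case by simp
  next
    case (snoc j T)
    then have j: "j \<in> {1..K}" and IH: "(z (S @ T) $ i)^2 \<le> (z S $ i)^2" by auto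
    have "(z (S @ T @ [j]) $ i)^2 = (\<Lambda> j $ i $ i)^2 * (z (S @ T) $ i)^2"
      using zstep[OF j, of "S @ T" i] by (simp add: power_mult_distrib)
    also have "\<dots> \<le> 1 * (z (S @ T) $ i)^2"
      using lam[OF j, of i] by (intro mult_right_mono) (auto simp: abs_square_le_1)
    finally show ?case using IH by simp
  qed
  fix S S' \<omega>
  assume H: "set S' \<subseteq> {1..K} \<and> (\<exists>T. S' = S @ T) \<and> \<omega> \<in> {1..K}"
  then obtain T where T: "S' = S @ T" and w: "\<omega> \<in> {1..K}" and sT: "set T \<subseteq> {1..K}" by auto
  have diff: "h_fun C L e0 R - h_fun C L e0 (R @ [\<omega>]) = (\<Sum>i\<in>UNIV. (z R $ i)^2 * (1 - (\<Lambda> \<omega> $ i $ i)^2))" for R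
    unfolding hz using zstep[OF w]
    by (simp add: sum_subtractf[symmetric] power_mult_distrib algebra_simps)
  show "h_fun C L e0 S - h_fun C L e0 (S @ [\<omega>]) \<ge> h_fun C L e0 S' - h_fun C L e0 (S' @ [\<omega>])"
    unfolding diff T
  proof (rule sum_mono)
    fix i
    have "0 \<le> 1 - (\<Lambda> \<omega> $ i $ i)^2" using lam[OF w, of i] by (simp add: abs_square_le_1)
    then show "(z (S @ T) $ i)^2 * (1 - (\<Lambda> \<omega> $ i $ i)^2) \<le> (z S $ i)^2 * (1 - (\<Lambda> \<omega> $ i $ i)^2)"
      using mono[OF sT] by (intro mult_right_mono) auto
  qed
qed

end
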